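(* Let $\frac23\le M<\frac34$ and consider Algorithm D on an input whose optimal offline makespan is $1$. If job $j$ is handled by Step 4 and is assigned to $m_1$, then the set $W$ computed in Step 4 satisfies $|W|\le 1$ and $|W|<|Y_{j-1}|$.
   Context: Model (two hierarchical machines with migration, bin stretching). Jobs $1,2,\dots,n$ arrive one by one. Job $j$ has a size $p_j>0$ and a grade of service (GoS) $g_j\in\{1,2\}$; a job of GoS $1$ may only be processed on machine $m_1$, a job of GoS $2$ may be processed on $m_1$ or on $m_2$. When job $j$ arrives, the algorithm must assign it, and may migrate previously arrived jobs (respecting GoS) of total size at most $M\cdot p_j$. The optimal offline makespan of the complete input is known in advance and scaled to $1$. Notation: $Y_{j}$ is the set of jobs on $m_2$ just after job $j$ has been handled, $y_j$ its total size, $y_0=0$; "sorted $Y_{j-1}$" lists $Y_{j-1}$ in non-increasing order of size; $w_j$ is the total size of the (current) set $W$. Algorithm D (parameter $M$). On arrival of job $j$: Step 2: if $g_j=1$ or $y_{j-1}\ge M$, assign $j$ to $m_1$. Step 3: else if $y_{j-1}+p_j\le 2-M$, assign $j$ to $m_2$. Step 4: else if $p_j\ge M$: let $W$ be the longest prefix of sorted $Y_{j-1}$ with total size at most $M\cdot p_j$ (possibly empty). If $y_{j-1}-w_j+p_j>2-M$, assign $j$ to $m_1$; otherwise migrate the jobs of $W$ to $m_1$ and assign $j$ to $m_2$. Step 5: else (so $p_j<M$): let $W$ be the shortest prefix of sorted $Y_{j-1}$ with total size at least $M/3$ (or $Y_{j-1}$ if none exists). If $w_j>\min\{2M/3,\,M\cdot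 p_j\}$, replace $W$ by $Y_{j-1}\setminus W$. Then, if $y_{j-1}-w_j+p_j>2-M$, assign $j$ to $m_1$; otherwise migrate the jobs of $W$ to $m_1$ and assign $j$ to $m_2$. *)

theory Defs
  imports Complex_Main "HOL-Library.Product_Lexorder"
begin

text \<open>Jobs are indexed 1,2,...,n. p j is the size, g j the grade of service (1 or 2).
  A state of Algorithm D is represented by the set Y of (indices of) jobs on machine m2.\<close>

definition load :: "(nat \<Rightarrow> real) \<Rightarrow> nat set \<Rightarrow> real" where
  "load p S = (\<Sum>i\<in>S. p i)"

definition sortedY :: "(nat \<Rightarrow> real) \<Rightarrow> nat set \<Rightarrow> nat list" where
  "sortedY p Y = sort_key (\<lambda>i. (- p i, i)) (sorted_list_of_set Y)"

definition prefix_load :: "(nat \<Rightarrow> real) \<Rightarrow> nat set \<Rightarrow> nat \<Rightarrow> real" where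
  "prefix_load p Y k = sum_list (map p (take k (sortedY p Y)))"

definition W_step4 :: "real \<Rightarrow> (nat \<Rightarrow> real) \<Rightarrow> nat set \<Rightarrow> nat \<Rightarrow> nat set" where
  "W_step4 M p Y j =
     set (take (GREATEST k. k \<le> card Y \<and> prefix_load p Y k \<le> M * p j) (sortedY p Y))"

definition W_step5 :: "real \<Rightarrow> (nat \<Rightarrow> real) \<Rightarrow> nat set \<Rightarrow> nat \<Rightarrow> nat set" where
  "W_step5 M p Y j =
     (let W0 = (if (\<exists>k\<le>card Y. prefix_load p Y k \<ge> M / 3)
                then set (take (LEAST k. k \<le> card Y \<and> prefix_load p Y k \<ge> M / 3) (sortedY p Y))
                else Y)
      in if load p W0 > min (2 * M / 3) (M * p j) then Y - W0 else W0)"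

definition stepD :: "real \<Rightarrow> (nat \<Rightarrow> real) \<Rightarrow> (nat \<Rightarrow> nat) \<Rightarrow> nat set \<Rightarrow> nat \<Rightarrow> nat set" where
  "stepD M p g Y j =
     (if g j = 1 \<or> load p Y \<ge> M then Y
      else if load p Y + p j \<le> 2 - M then insert j Y
      else if p j \<ge> M then
        (let W = W_step4 M p Y j in
          if load p Y - load p W + p j > 2 - M then Y else insert j (Y - W))
      else
        (let W = W_step5 M p Y j in
          if load p Y - load p W + p j > 2 - M then Y else insert j (Y - W)))"

text \<open>algY M p g j = Y_j, the set of jobs on m2 just after job j has been handled.\<close>
fun algY :: "real \<Rightarrow> (nat \<Rightarrow> real) \<Rightarrow> (nat \<Rightarrow> nat) \<Rightarrow> nat \<Rightarrow> nat set" where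
  "algY M p g 0 = {}"
| "algY M p g (Suc j) = stepD M p g (algY M p g j) (Suc j)"

text \<open>Optimal offline makespan of jobs 1..n: minimum over GoS-respecting schedules
  (S = set of jobs placed on m2).\<close>
definition opt_makespan :: "nat \<Rightarrow> (nat \<Rightarrow> real) \<Rightarrow> (nat \<Rightarrow> nat) \<Rightarrow> real" where
  "opt_makespan n p g =
     Min ((\<lambda>S. max (load p ({1..n} - S)) (load p S)) ` {S. S \<subseteq> {1..n} \<and> (\<forall>i\<in>S. g i = 2)})"

end

theory Submission
  imports Defs
begin

lemma algY_sub: "algY M p g k \<subseteq> {1..k}"
proof (induction k)
  case 0 then show ?case by simp
next
  case (Suc k)
  have "stepD M p g (algY M p g k) (Suc k) \<subseteq> insert (Suc k) (algY M p g k)"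
    unfolding stepD_def Let_def by auto
  also have "\<dots> \<subseteq> {1..Suc k}" using Suc.IH by auto
  finally show ?case by simp
qed

theorem mainTheorem14:
  fixes M :: real and p :: "nat \<Rightarrow> real" and g :: "nat \<Rightarrow> nat" and n j :: nat
  assumes "2 / 3 \<le> M" and "M < 3 / 4"
    and "\<forall>i\<in>{1..n}. p i > 0 \<and> g i \<in> {1, 2}"
    and "opt_makespan n p g = 1"
    and "j \<in> {1..n}"
    \<comment> \<open>job j is handled by Step 4\<close>
    and "g j = 2" and "load p (algY M p g (j - 1)) < M"
    and "load p (algY M p g (j - 1)) + p j > 2 - M"
    and "p j \<ge> M"
    \<comment> \<open>and is assigned to m1\<close>
    and "load p (algY M p g (j - 1)) - load p (W_step4 M p (algY M p g (j - 1)) j) + p j > 2 - M"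
  shows "card (W_step4 M p (algY M p g (j - 1)) j) \<le> 1
       \<and> card (W_step4 M p (algY M p g (j - 1)) j) < card (algY M p g (j - 1))"
proof -
  define Y where "Y = algY M p g (j - 1)"
  have YS: "Y \<subseteq> {1..n}" proof -
    have "{1..j-1} \<subseteq> {1..n}" using assms(5) by auto
    thus ?thesis using algY_sub[of M p g "j-1"] unfolding Y_def by blast
  qed
  have finY: "finite Y" using YS finite_subset by blast
  have pos: "\<And>i. i \<in> Y \<Longrightarrow> p i > 0" using YS assms(3) by auto
  define F where "F = {S. S \<subseteq> {1..n} \<and> (\<forall>i\<in>S. g i = 2)}"
  have finF: "finite F" unfolding F_def
    by (rule finite_subset[of _ "Pow {1..n}"]) auto
  have neF: "F \<noteq> {}" unfolding F_def by auto
  let ?f = "\<lambda>S. max (load p ({1..n} - S)) (load p S)"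
  have "Min (?f ` F) \<in> ?f ` F" using finF neF by (intro Min_in) auto
  then obtain S where SF: "S \<in> F" and S1: "?f S = 1"
    using assms(4) unfolding opt_makespan_def F_def[symmetric] by auto
  have pj1: "p j \<le> 1"
  proof (cases "j \<in> S")
    case True
    have "S \<subseteq> {1..n}" using SF F_def by auto
    hence "p j \<le> load p S" unfolding load_def
      using True assms(3) by (intro member_le_sum) (auto intro: finite_subset less_imp_le)
    with S1 show ?thesis by linarith
  next
    case False
    have "p j \<le> load p ({1..n} - S)" unfolding load_def
      using False assms(3,5) by (intro member_le_sum) (auto intro: less_imp_le)
    with S1 show ?thesis by linarith
  qed
  define L where "L = sortedY p Y"
  have setL: "set L = Y" and distL: "distinct L" and lenL: "length L = card Y"
    using finY unfolding L_def sortedY_def by (auto simp: distinct_card[symmetric])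
  have srt: "sorted (map (\<lambda>i. (- p i, i)) L)" unfolding L_def sortedY_def by simp
  have mono: "\<And>a b. a \<le> b \<Longrightarrow> b < length L \<Longrightarrow> p (L ! b) \<le> p (L ! a)"
  proof -
    fix a b assume "a \<le> b" "b < length L"
    hence "(map (\<lambda>i. (- p i, i)) L) ! a \<le> (map (\<lambda>i. (- p i, i)) L) ! b"
      using srt by (intro sorted_nth_mono) auto
    thus "p (L ! b) \<le> p (L ! a)" using \<open>a \<le> b\<close> \<open>b < length L\<close>
      by (auto simp: less_eq_prod_def)
  qed
  define P where "P = (\<lambda>k. k \<le> card Y \<and> prefix_load p Y k \<le> M * p j)"
  define k where "k = (GREATEST k. P k)"
  have P0: "P 0" unfolding P_def prefix_load_def using assms(1,9) by simp
  have bnd: "\<And>y. P y \<Longrightarrow> y \<le> card Y" unfolding P_def by auto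
  have Pk: "P k" unfolding k_def by (rule GreatestI_nat[where P=P, OF P0 bnd])
  have kmax: "\<And>m. P m \<Longrightarrow> m \<le> k" unfolding k_def by (rule Greatest_le_nat[where P=P, OF _ bnd])
  have Wdef: "W_step4 M p Y j = set (take k L)"
    unfolding W_step4_def k_def P_def L_def by simp
  have cardW: "card (W_step4 M p Y j) = k"
    using Wdef distL Pk lenL P_def by (simp add: distinct_card)
  have loadW: "load p (W_step4 M p Y j) = prefix_load p Y k"
    unfolding Wdef load_def prefix_load_def L_def[symmetric]
    using distL by (simp add: sum_list_distinct_conv_sum_set)
  have loadY: "load p Y = sum_list (map p L)"
    unfolding load_def using distL setL by (metis sum_list_distinct_conv_sum_set)
  have hyp: "load p Y - prefix_load p Y k + p j > 2 - M"
    using assms(10) loadW unfolding Y_def by simp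
  have yM: "load p Y < M" using assms(7) Y_def by simp
  have klt: "k < card Y"
  proof (rule ccontr)
    assume "\<not> k < card Y"
    hence "k = card Y" using Pk P_def by auto
    hence "prefix_load p Y k = load p Y" using loadY lenL
      unfolding prefix_load_def L_def[symmetric] by simp
    with hyp pj1 assms(2) show False by simp
  qed
  have kle1: "k \<le> 1"
  proof (rule ccontr)
    assume "\<not> k \<le> 1"
    hence k2: "k \<ge> 2" by simp
    define q where "q = p (L ! k)"
    have qpos: "q > 0" unfolding q_def using pos setL klt lenL by (metis nth_mem)
    have "\<not> P (Suc k)" using kmax by fastforce
    hence big: "prefix_load p Y (Suc k) > M * p j" using klt P_def by auto
    have pl: "prefix_load p Y (Suc k) = prefix_load p Y k + q"
      unfolding prefix_load_def L_def[symmetric] q_def using klt lenL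
      by (simp add: take_Suc_conv_app_nth)
    have "prefix_load p Y k = (\<Sum>i = 0..<k. p (L ! i))"
      unfolding prefix_load_def L_def[symmetric] using klt lenL
      by (simp add: sum_list_sum_nth)
    also have "\<dots> \<ge> (\<Sum>i = 0..<k. q)"
      unfolding q_def using klt lenL by (intro sum_mono mono) auto
    finally have "prefix_load p Y k \<ge> real k * q" by simp
    moreover have "real k * q \<ge> 2 * q" using k2 qpos by simp
    ultimately have w2: "prefix_load p Y k \<ge> 2 * q" by linarith
    have "(3/2 - M) * p j \<le> (3/2 - M) * 1" using pj1 assms(2) by (intro mult_left_mono) auto
    with w2 big pl hyp yM assms(1,2) show False by (simp add: algebra_simps)
  qed
  show ?thesis using cardW kle1 klt unfolding Y_def by simp
qed

end
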